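(* Let $d\ge3$, $\beta>0$, $g:\mathbb{R}^d\to\mathbb{R}$ Lipschitz. There are positive constants $C_1,C_2,C_3,C_4$ depending only on $d,\beta,g$ such that for any $\varepsilon>0$, $t\in\mathbb{Z}_{\ge0}$, $x\in\mathbb{Z}^d$, \[ C_1e^{-C_2\varepsilon(|x|+\sqrt t)}\le G_\varepsilon(t,x)\le C_3e^{C_4(\varepsilon|x|+\varepsilon^2t)}. \]
   Context: $\{S_n\}_{n\ge0}$ is simple symmetric random walk on $\mathbb{Z}^d$ started at the origin; $g_\varepsilon(x)=g(\varepsilon x)$ and $G_\varepsilon(t,x)=\mathbb{E}(e^{\beta g_\varepsilon(S_t+x)})$ for $t\in\mathbb{Z}_{\ge0}$, $x\in\mathbb{Z}^d$. *)

theory Defs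
  imports "HOL-Analysis.Analysis" "HOL-Probability.Probability"
begin

text \<open>Lattice points of Z^d are modelled as int^'d (dimension d = CARD('d)).\<close>

definition unit_lattice :: "'d::finite \<Rightarrow> int^'d" where
  "unit_lattice i = (\<chi> j. if j = i then 1 else 0)"

definition srw_step :: "(int^'d::finite) pmf" where
  "srw_step = pmf_of_set ((\<lambda>i. unit_lattice i) ` UNIV \<union> (\<lambda>i. - unit_lattice i) ` UNIV)"

primrec srw :: "nat \<Rightarrow> (int^'d::finite) pmf" where
  "srw 0 = return_pmf 0"
| "srw (Suc n) = bind_pmf (srw n) (\<lambda>s. map_pmf (\<lambda>e. s + e) srw_step)"

definition lattice_to_real :: "int^'d::finite \<Rightarrow> real^'d" where
  "lattice_to_real x = (\<chi> j. real_of_int (x $ j))"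

definition G_eps :: "real \<Rightarrow> (real^'d::finite \<Rightarrow> real) \<Rightarrow> real \<Rightarrow> nat \<Rightarrow> int^'d \<Rightarrow> real" where
  "G_eps \<beta> g \<epsilon> t x =
     measure_pmf.expectation (srw t) (\<lambda>s. exp (\<beta> * g (\<epsilon> *\<^sub>R lattice_to_real (s + x))))"

end

theory Submission
  imports Defs
begin

abbreviation stepset :: "(int^'d::finite) set" where
  "stepset \<equiv> range unit_lattice \<union> range (\<lambda>i. - unit_lattice i)"

lemma set_srw_step: "set_pmf (srw_step :: (int^'d::finite) pmf) = stepset"
  unfolding srw_step_def by (rule set_pmf_of_set) auto

lemma finite_srw: "finite (set_pmf (srw n :: (int^'d::finite) pmf))"
  by (induction n) (auto simp: set_srw_step)

lemma integrable_srw: "integrable (measure_pmf (srw n :: (int^'d::finite) pmf)) (f :: _ \<Rightarrow> real)"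
  by (rule integrable_measure_pmf_finite[OF finite_srw])

lemma integrable_step: "integrable (measure_pmf (srw_step :: (int^'d::finite) pmf)) (f :: _ \<Rightarrow> real)"
  by (rule integrable_measure_pmf_finite) (simp add: set_srw_step)

lemma unit_inj: "inj (unit_lattice :: 'd::finite \<Rightarrow> int^'d)"
  by (auto simp: inj_def unit_lattice_def vec_eq_iff split: if_splits)

lemma unit_inj2: "inj (\<lambda>i. - (unit_lattice :: 'd::finite \<Rightarrow> int^'d) i)"
  by (auto simp: inj_def unit_lattice_def vec_eq_iff split: if_splits)

lemma unit_disj: "range (unit_lattice :: 'd::finite \<Rightarrow> int^'d) \<inter> range (\<lambda>i. - unit_lattice i) = {}"
proof -
  have "unit_lattice i \<noteq> - (unit_lattice j :: int^'d)" for i j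
  proof
    assume "unit_lattice i = - (unit_lattice j :: int^'d)"
    then have "unit_lattice i $ i = - (unit_lattice j $ i :: int)" by simp
    then show False by (auto simp: unit_lattice_def split: if_splits)
  qed
  then show ?thesis by auto
qed

lemma sum_stepset: "sum h (stepset :: (int^'d::finite) set) = (\<Sum>i\<in>UNIV. h (unit_lattice i) + h (- unit_lattice i))"
proof -
  have "sum h (stepset :: (int^'d::finite) set) = sum h (range unit_lattice) + sum h (range (\<lambda>i. - unit_lattice i))"
    by (rule sum.union_disjoint) (use unit_disj in auto)
  also have "\<dots> = (\<Sum>i\<in>UNIV. h (unit_lattice i)) + (\<Sum>i\<in>UNIV. h (- unit_lattice i))"
    using sum.reindex[OF unit_inj, of h] sum.reindex[OF unit_inj2, of h] by (simp add: comp_def)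
  finally show ?thesis by (simp add: sum.distrib)
qed

lemma step_expect: "measure_pmf.expectation (srw_step :: (int^'d::finite) pmf) h
   = (\<Sum>i\<in>UNIV. h (unit_lattice i) + h (- unit_lattice i)) / (2 * real CARD('d))"
proof -
  have "measure_pmf.expectation (srw_step :: (int^'d::finite) pmf) h = sum h stepset / card (stepset :: (int^'d) set)"
    unfolding srw_step_def by (rule integral_pmf_of_set) auto
  also have "card (stepset :: (int^'d) set) = sum (\<lambda>_. 1) (stepset :: (int^'d) set)" by simp
  also have "\<dots> = 2 * CARD('d)" by (subst sum_stepset) simp
  finally show ?thesis by (simp add: sum_stepset)
qed

lemma srw_Suc_integral:
  fixes f :: "int^'d::finite \<Rightarrow> real"
  assumes nn: "\<And>s. f s \<ge> 0"
  shows "measure_pmf.expectation (srw (Suc n)) f =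
    measure_pmf.expectation (srw n) (\<lambda>s. measure_pmf.expectation srw_step (\<lambda>e. f (s + e)))"
proof -
  let ?N = "\<lambda>s. map_pmf (\<lambda>e. s + e) (srw_step :: (int^'d) pmf)"
  have "measure_pmf.expectation (srw (Suc n)) f = enn2real (\<integral>\<^sup>+ x. ennreal (f x) \<partial>srw (Suc n))"
    by (rule integral_eq_nn_integral) (auto simp: nn)
  also have "(\<integral>\<^sup>+ x. ennreal (f x) \<partial>srw (Suc n)) = (\<integral>\<^sup>+ s. \<integral>\<^sup>+ y. ennreal (f y) \<partial>?N s \<partial>srw n)"
    by simp
  also have "\<dots> = (\<integral>\<^sup>+ s. ennreal (measure_pmf.expectation (?N s) f) \<partial>srw n)"
    by (intro nn_integral_cong nn_integral_eq_integral integrable_measure_pmf_finite)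
       (auto simp: set_srw_step nn)
  also have "\<dots> = ennreal (measure_pmf.expectation (srw n) (\<lambda>s. measure_pmf.expectation (?N s) f))"
    by (intro nn_integral_eq_integral integrable_srw) (auto intro!: integral_nonneg_AE simp: nn)
  finally show ?thesis
    by (simp add: integral_nonneg_AE nn)
qed

definition linf :: "('d::finite \<Rightarrow> real) \<Rightarrow> int^'d \<Rightarrow> real" where
  "linf c s = (\<Sum>j\<in>UNIV. c j * real_of_int (s $ j))"

lemma linf_add: "linf c (s + e) = linf c s + linf c e"
  by (simp add: linf_def sum.distrib distrib_left)

lemma linf_unit: "linf c (unit_lattice i) = c i"
  by (simp add: linf_def unit_lattice_def if_distrib cong: if_cong)

lemma linf_unit_neg: "linf c (- unit_lattice i) = - c i"
  by (simp add: linf_def unit_lattice_def if_distrib sum_negf[symmetric] cong: if_cong)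

lemma step_mgf:
  assumes "\<And>j. c j = 1 \<or> c j = -1"
  shows "measure_pmf.expectation (srw_step :: (int^'d::finite) pmf) (\<lambda>e. exp (a * linf c e)) = cosh a"
proof -
  have "exp (a * c i) + exp (- (a * c i)) = 2 * cosh a" for i
    using assms[of i] by (auto simp: cosh_def)
  then show ?thesis
    by (simp add: step_expect linf_unit linf_unit_neg)
qed

lemma srw_mgf:
  assumes "\<And>j. c j = 1 \<or> c j = -1"
  shows "measure_pmf.expectation (srw n :: (int^'d::finite) pmf) (\<lambda>s. exp (a * linf c s)) = cosh a ^ n"
proof (induction n)
  case 0
  then show ?case by (simp add: linf_def)
next
  case (Suc n)
  have "measure_pmf.expectation (srw (Suc n) :: (int^'d::finite) pmf) (\<lambda>s. exp (a * linf c s))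
     = measure_pmf.expectation (srw n :: (int^'d::finite) pmf)
        (\<lambda>s. measure_pmf.expectation srw_step (\<lambda>e. exp (a * linf c s) * exp (a * linf c e)))"
    by (subst srw_Suc_integral) (simp_all add: linf_add distrib_left exp_add)
  also have "\<dots> = measure_pmf.expectation (srw n :: (int^'d::finite) pmf) (\<lambda>s. exp (a * linf c s) * cosh a)"
  proof -
    have st: "measure_pmf.expectation (srw_step :: (int^'d::finite) pmf) (\<lambda>e. exp (a * linf c e)) = cosh a"
      using assms by (rule step_mgf)
    show ?thesis by (simp add: st)
  qed
  also have "\<dots> = cosh a ^ Suc n" using Suc by simp
  finally show ?case .
qed

lemma cosh_le_aux: "0 \<le> (a::real) \<Longrightarrow> cosh a \<le> exp (a^2)"
proof (cases "a \<le> 1")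
  case True
  assume a0: "0 \<le> a"
  have e1: "exp a \<le> 1 + a + a^2" using exp_bound[OF a0 True] .
  have e2: "1 + a \<le> exp a" by (rule exp_ge_add_one_self)
  have "exp (-a) = 1 / exp a" by (simp add: exp_minus field_simps)
  also have "\<dots> \<le> 1 / (1 + a)" using e2 a0 by (intro divide_left_mono) auto
  also have "\<dots> \<le> 1 - a + a^2"
  proof -
    have "1 \<le> (1 - a + a^2) * (1 + a)" using a0 by (simp add: algebra_simps power2_eq_square power3_eq_cube)
    then show ?thesis using a0 by (simp add: divide_simps)
  qed
  finally have "cosh a \<le> 1 + a^2" using e1 by (simp add: cosh_def)
  also have "\<dots> \<le> exp (a^2)" by (rule exp_ge_add_one_self)
  finally show ?thesis .
next
  case False
  assume a0: "0 \<le> a"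
  have "exp (-a) \<le> exp a" using a0 by simp
  then have "cosh a \<le> exp a" by (simp add: cosh_def)
  also have "exp a \<le> exp (a^2)" using False by (simp add: power2_eq_square)
  finally show ?thesis .
qed

lemma cosh_le: "cosh (a::real) \<le> exp (a^2)"
  using cosh_le_aux[of a] cosh_le_aux[of "-a"] by (cases "a \<ge> 0") auto

definition cs :: "('d \<Rightarrow> bool) \<Rightarrow> 'd \<Rightarrow> real" where
  "cs \<sigma> j = (if \<sigma> j then 1 else -1)"

lemma norm_le_linf: "norm (lattice_to_real (s :: int^'d::finite)) \<le> linf (cs (\<lambda>j. s $ j \<ge> 0)) s"
proof -
  have "norm (lattice_to_real s) \<le> (\<Sum>j\<in>UNIV. \<bar>lattice_to_real s $ j\<bar>)" by (rule norm_le_l1_cart)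
  also have "\<dots> = linf (cs (\<lambda>j. s $ j \<ge> 0)) s"
    unfolding linf_def lattice_to_real_def cs_def by (intro sum.cong) auto
  finally show ?thesis .
qed

lemma mgf_norm:
  assumes a0: "0 \<le> a"
  shows "measure_pmf.expectation (srw n :: (int^'d::finite) pmf) (\<lambda>s. exp (a * norm (lattice_to_real s)))
    \<le> real CARD('d \<Rightarrow> bool) * exp (a^2 * real n)"
proof -
  have pw: "exp (a * norm (lattice_to_real s)) \<le> (\<Sum>\<sigma>\<in>UNIV. exp (a * linf (cs \<sigma>) s))" for s :: "int^'d"
  proof -
    have "exp (a * norm (lattice_to_real s)) \<le> exp (a * linf (cs (\<lambda>j. s $ j \<ge> 0)) s)"
      using norm_le_linf[of s] a0 by (simp add: mult_left_mono)
    also have "\<dots> \<le> (\<Sum>\<sigma>\<in>UNIV. exp (a * linf (cs \<sigma>) s))"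
      by (rule member_le_sum) auto
    finally show ?thesis .
  qed
  have "measure_pmf.expectation (srw n :: (int^'d::finite) pmf) (\<lambda>s. exp (a * norm (lattice_to_real s)))
     \<le> measure_pmf.expectation (srw n :: (int^'d::finite) pmf) (\<lambda>s. \<Sum>\<sigma>\<in>UNIV. exp (a * linf (cs \<sigma>) s))"
    by (intro integral_mono integrable_srw pw)
  also have "\<dots> = (\<Sum>\<sigma>\<in>UNIV. measure_pmf.expectation (srw n :: (int^'d::finite) pmf) (\<lambda>s. exp (a * linf (cs \<sigma>) s)))"
    by (rule Bochner_Integration.integral_sum) (rule integrable_srw)
  also have "\<dots> = (\<Sum>\<sigma>\<in>(UNIV::('d\<Rightarrow>bool) set). cosh a ^ n)"
    by (intro sum.cong refl srw_mgf) (auto simp: cs_def)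
  also have "\<dots> \<le> (\<Sum>\<sigma>\<in>(UNIV::('d\<Rightarrow>bool) set). exp (a^2 * real n))"
  proof (intro sum_mono)
    fix \<sigma>
    have "cosh a ^ n \<le> exp (a^2) ^ n" by (intro power_mono cosh_le) (simp add: cosh_def add_pos_pos)
    also have "\<dots> = exp (a^2 * real n)" by (simp add: exp_of_nat2_mult)
    finally show "cosh a ^ n \<le> exp (a^2 * real n)" .
  qed
  also have "\<dots> = real CARD('d \<Rightarrow> bool) * exp (a^2 * real n)" by simp
  finally show ?thesis .
qed

lemma jensen_exp:
  fixes p :: "'a pmf" and \<phi> :: "'a \<Rightarrow> real"
  assumes fin: "finite (set_pmf p)"
  shows "exp (measure_pmf.expectation p \<phi>) \<le> measure_pmf.expectation p (\<lambda>s. exp (\<phi> s))"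
proof -
  define m where "m = measure_pmf.expectation p \<phi>"
  have pw: "exp m * (1 - m) + exp m * \<phi> s \<le> exp (\<phi> s)" for s
  proof -
    have "1 + (\<phi> s - m) \<le> exp (\<phi> s - m)" by (rule exp_ge_add_one_self)
    then have "exp m * (1 + (\<phi> s - m)) \<le> exp m * exp (\<phi> s - m)" by simp
    then show ?thesis by (simp add: exp_diff algebra_simps)
  qed
  have int: "integrable (measure_pmf p) f" for f :: "'a \<Rightarrow> real"
    by (rule integrable_measure_pmf_finite[OF fin])
  have "measure_pmf.expectation p (\<lambda>s. exp m * (1 - m) + exp m * \<phi> s) = exp m * (1 - m) + exp m * m"
    by (simp add: int m_def)
  also have "\<dots> = exp m" by (simp add: algebra_simps)
  finally have eq: "measure_pmf.expectation p (\<lambda>s. exp m * (1 - m) + exp m * \<phi> s) = exp m" .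
  have "measure_pmf.expectation p (\<lambda>s. exp m * (1 - m) + exp m * \<phi> s) \<le> measure_pmf.expectation p (\<lambda>s. exp (\<phi> s))"
    by (intro integral_mono int pw)
  then show ?thesis using eq m_def by simp
qed

lemma mean_norm:
  "measure_pmf.expectation (srw n :: (int^'d::finite) pmf) (\<lambda>s. norm (lattice_to_real s))
    \<le> (ln (real CARD('d \<Rightarrow> bool)) + 1) * sqrt (real n)"
proof (cases "n = 0")
  case True
  then show ?thesis by (simp add: lattice_to_real_def vec_eq_iff)
next
  case False
  define N where "N = real CARD('d \<Rightarrow> bool)"
  have N0: "N > 0" unfolding N_def by simp
  define a where "a = 1 / sqrt (real n)"
  have a0: "a > 0" using False by (simp add: a_def)
  have an: "a^2 * real n = 1" using False by (simp add: a_def power_divide)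
  define E where "E = measure_pmf.expectation (srw n :: (int^'d::finite) pmf) (\<lambda>s. norm (lattice_to_real s))"
  have "exp (a * E) = exp (measure_pmf.expectation (srw n :: (int^'d::finite) pmf) (\<lambda>s. a * norm (lattice_to_real s)))"
    by (simp add: E_def)
  also have "\<dots> \<le> measure_pmf.expectation (srw n :: (int^'d::finite) pmf) (\<lambda>s. exp (a * norm (lattice_to_real s)))"
    by (rule jensen_exp[OF finite_srw])
  also have "\<dots> \<le> N * exp (a^2 * real n)" unfolding N_def using a0 by (intro mgf_norm) simp
  also have "\<dots> = exp (ln N + 1)" using N0 by (simp add: an exp_add)
  finally have "a * E \<le> ln N + 1" by simp
  then have "E \<le> (ln N + 1) / a" using a0 by (simp add: field_simps)
  then show ?thesis using a_def E_def N_def by simp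
qed

lemma lts_add: "lattice_to_real (s + x) = lattice_to_real s + lattice_to_real (x :: int^'d::finite)"
  by (simp add: lattice_to_real_def vec_eq_iff)

theorem lemma5p4:
  fixes g :: "real^'d::finite \<Rightarrow> real" and \<beta> :: real
  assumes "CARD('d) \<ge> 3" and "\<beta> > 0" and "\<exists>L. L-lipschitz_on UNIV g"
  shows "\<exists>C1 C2 C3 C4 :: real. C1 > 0 \<and> C2 > 0 \<and> C3 > 0 \<and> C4 > 0 \<and>
    (\<forall>\<epsilon>>0. \<forall>(t::nat) (x::int^'d).
      C1 * exp (- C2 * \<epsilon> * (norm (lattice_to_real x) + sqrt (real t))) \<le> G_eps \<beta> g \<epsilon> t x \<and>
      G_eps \<beta> g \<epsilon> t x \<le> C3 * exp (C4 * (\<epsilon> * norm (lattice_to_real x) + \<epsilon>^2 * real t)))"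
proof -
  from assms(3) obtain L0 where L0: "L0-lipschitz_on UNIV g" by blast
  define L where "L = \<bar>L0\<bar>"
  have L_ge: "L \<ge> 0" by (simp add: L_def)
  have lip: "\<bar>g y - g 0\<bar> \<le> L * norm y" for y
  proof -
    have "dist (g y) (g 0) \<le> L0 * dist y 0" by (rule lipschitz_onD[OF L0]) auto
    also have "\<dots> \<le> L * dist y 0" by (simp add: L_def mult_right_mono)
    finally show ?thesis by (simp add: dist_real_def)
  qed
  define N where "N = real CARD('d \<Rightarrow> bool)"
  have N1: "N \<ge> 1" unfolding N_def by simp
  define K where "K = ln N + 1"
  have K1: "K \<ge> 1" using N1 by (simp add: K_def)
  define b where "b = \<beta> * L"
  have b0: "b \<ge> 0" using assms(2) L_ge by (simp add: b_def)
  define C1 where "C1 = exp (\<beta> * g 0)"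
  define C2 where "C2 = b * K + 1"
  define C3 where "C3 = N * exp (\<beta> * g 0)"
  define C4 where "C4 = b + b^2 + 1"
  have C2b: "b \<le> C2" using b0 K1 unfolding C2_def
    by (metis add_increasing2 mult_left_mono mult.right_neutral zero_le_one)
  have C2bK: "b * K \<le> C2" by (simp add: C2_def)
  have pos: "C1 > 0" "C2 > 0" "C3 > 0" "C4 > 0"
    using b0 K1 N1 by (auto simp: C1_def C2_def C3_def C4_def add_nonneg_pos)
  have main: "C1 * exp (- C2 * \<epsilon> * (norm (lattice_to_real x) + sqrt (real t))) \<le> G_eps \<beta> g \<epsilon> t x \<and>
      G_eps \<beta> g \<epsilon> t x \<le> C3 * exp (C4 * (\<epsilon> * norm (lattice_to_real x) + \<epsilon>^2 * real t))"
    if e0: "\<epsilon> > 0" for \<epsilon> t and x :: "int^'d"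
  proof -
    define X where "X = norm (lattice_to_real x)"
    define \<phi> where "\<phi> s = \<beta> * g (\<epsilon> *\<^sub>R lattice_to_real (s + x))" for s
    have G: "G_eps \<beta> g \<epsilon> t x = measure_pmf.expectation (srw t) (\<lambda>s. exp (\<phi> s))"
      by (simp add: G_eps_def \<phi>_def)
    have dev: "\<bar>\<phi> s - \<beta> * g 0\<bar> \<le> b * \<epsilon> * X + b * \<epsilon> * norm (lattice_to_real s)" for s
    proof -
      have "norm (\<epsilon> *\<^sub>R lattice_to_real (s + x)) \<le> \<epsilon> * (norm (lattice_to_real s) + X)"
        using e0 by (simp add: lts_add X_def mult_left_mono norm_triangle_ineq)
      then have "\<bar>g (\<epsilon> *\<^sub>R lattice_to_real (s + x)) - g 0\<bar> \<le> L * (\<epsilon> * (norm (lattice_to_real s) + X))"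
        using lip[of "\<epsilon> *\<^sub>R lattice_to_real (s + x)"] L_ge by (meson mult_left_mono order_trans)
      then have "\<beta> * \<bar>g (\<epsilon> *\<^sub>R lattice_to_real (s + x)) - g 0\<bar> \<le> \<beta> * (L * (\<epsilon> * (norm (lattice_to_real s) + X)))"
        using assms(2) by (simp add: mult_left_mono)
      moreover have "\<bar>\<phi> s - \<beta> * g 0\<bar> = \<beta> * \<bar>g (\<epsilon> *\<^sub>R lattice_to_real (s + x)) - g 0\<bar>"
        using assms(2) by (simp add: \<phi>_def abs_mult flip: right_diff_distrib)
      ultimately show ?thesis by (simp add: b_def algebra_simps)
    qed
    define M where "M = measure_pmf.expectation (srw t :: (int^'d) pmf) (\<lambda>s. norm (lattice_to_real s))"
    have MK: "M \<le> K * sqrt (real t)" unfolding M_def K_def N_def by (rule mean_norm)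
    have lower: "C1 * exp (- C2 * \<epsilon> * (X + sqrt (real t))) \<le> G_eps \<beta> g \<epsilon> t x"
    proof -
      have "measure_pmf.expectation (srw t :: (int^'d) pmf) (\<lambda>s. \<beta> * g 0 - b * \<epsilon> * X - b * \<epsilon> * norm (lattice_to_real s))
          \<le> measure_pmf.expectation (srw t) \<phi>"
        by (rule Bochner_Integration.integral_mono[OF integrable_srw integrable_srw]) (use dev in \<open>smt (verit) abs_le_iff\<close>)
      moreover have "measure_pmf.expectation (srw t :: (int^'d) pmf) (\<lambda>s. \<beta> * g 0 - b * \<epsilon> * X - b * \<epsilon> * norm (lattice_to_real s))
          = \<beta> * g 0 - b * \<epsilon> * X - b * \<epsilon> * M"
        by (simp add: integrable_srw M_def)
      moreover have "b * \<epsilon> * M \<le> b * \<epsilon> * (K * sqrt (real t))"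
        using MK b0 e0 by (simp add: mult_left_mono)
      moreover have "b * \<epsilon> * X \<le> C2 * \<epsilon> * X"
        using C2b e0 by (simp add: X_def mult_right_mono)
      moreover have "b * \<epsilon> * (K * sqrt (real t)) \<le> C2 * \<epsilon> * sqrt (real t)"
      proof -
        have "b * K * (\<epsilon> * sqrt (real t)) \<le> C2 * (\<epsilon> * sqrt (real t))"
          using C2bK e0 by (intro mult_right_mono) auto
        then show ?thesis by (simp add: algebra_simps)
      qed
      ultimately have "\<beta> * g 0 - C2 * \<epsilon> * (X + sqrt (real t)) \<le> measure_pmf.expectation (srw t) \<phi>"
        by (simp add: algebra_simps)
      then have "exp (\<beta> * g 0 - C2 * \<epsilon> * (X + sqrt (real t))) \<le> exp (measure_pmf.expectation (srw t) \<phi>)"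
        by simp
      also have "\<dots> \<le> G_eps \<beta> g \<epsilon> t x" unfolding G by (rule jensen_exp[OF finite_srw])
      finally have fin: "exp (\<beta> * g 0 - C2 * \<epsilon> * (X + sqrt (real t))) \<le> G_eps \<beta> g \<epsilon> t x" .
      have "C1 * exp (- C2 * \<epsilon> * (X + sqrt (real t))) = exp (\<beta> * g 0 + (- C2 * \<epsilon> * (X + sqrt (real t))))"
        unfolding C1_def by (rule exp_add[symmetric])
      then show ?thesis using fin by simp
    qed
    have upper: "G_eps \<beta> g \<epsilon> t x \<le> C3 * exp (C4 * (\<epsilon> * X + \<epsilon>^2 * real t))"
    proof -
      have "G_eps \<beta> g \<epsilon> t x \<le> measure_pmf.expectation (srw t :: (int^'d) pmf)
          (\<lambda>s. exp (\<beta> * g 0 + b * \<epsilon> * X) * exp ((b * \<epsilon>) * norm (lattice_to_real s)))"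
        unfolding G
        by (rule Bochner_Integration.integral_mono[OF integrable_srw integrable_srw])
           (use dev in \<open>smt (verit) abs_le_iff exp_add exp_le_cancel_iff\<close>)
      also have "\<dots> = exp (\<beta> * g 0 + b * \<epsilon> * X) *
          measure_pmf.expectation (srw t :: (int^'d) pmf) (\<lambda>s. exp ((b * \<epsilon>) * norm (lattice_to_real s)))"
        by simp
      also have "\<dots> \<le> exp (\<beta> * g 0 + b * \<epsilon> * X) * (N * exp ((b * \<epsilon>)^2 * real t))"
        unfolding N_def using b0 e0 by (intro mult_left_mono mgf_norm) auto
      also have "\<dots> = C3 * exp (b * (\<epsilon> * X) + b^2 * (\<epsilon>^2 * real t))"
        by (simp add: C3_def exp_add power_mult_distrib algebra_simps)
      also have "\<dots> \<le> C3 * exp (C4 * (\<epsilon> * X + \<epsilon>^2 * real t))"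
      proof -
        have h1: "b * (\<epsilon> * X) \<le> C4 * (\<epsilon> * X)"
          using e0 b0 by (intro mult_right_mono) (auto simp: C4_def X_def)
        have h2: "b^2 * (\<epsilon>^2 * real t) \<le> C4 * (\<epsilon>^2 * real t)"
          using e0 b0 by (intro mult_right_mono) (auto simp: C4_def)
        show ?thesis using h1 h2 pos by (simp add: distrib_left)
      qed
      finally show ?thesis .
    qed
    show ?thesis using lower upper by (simp add: X_def)
  qed
  show ?thesis using pos main by blast
qed

end
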